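(* Let $C\xleftarrow{f}M\xrightarrow{g}D$ be a span of sets, regarded as the linear $(C\mathcal y,D\mathcal y)$-bicomodule $M\mathcal y$. Then the following $(D\mathcal y,C\mathcal y)$-bicomodules are isomorphic: (i) the transpose span $D\xleftarrow{g}M\xrightarrow{f}C$; (ii) the dual $\big((M\mathcal y)^{\dagger r}\big)^\vee$ of the right adjoint of $M\mathcal y$ in $\mathbb C\mathbf{at}^\sharp$; (iii) the left adjoint $\big((M\mathcal y)^\vee\big)^{\dagger l}$ of the dual of $M\mathcal y$ in $\mathbb C\mathbf{at}^\sharp$.
   Context: $\mathbb C\mathbf{at}^\sharp$: bicategory of comonoids in $(\mathbf{Poly},\mathcal y,\triangleleft)$ (small categories), bicomodules, bicomodule maps, horizontal composition $\triangleleft_d$. $C\mathcal y$ is the discrete category on a set $C$. A span $C\leftarrow M\to D$ is the same as a $(C\mathcal y,D\mathcal y)$-bicomodule with linear carrier $M\mathcal y$; its prafunctor $D\text{-}\mathbf{Set}\to C\text{-}\mathbf{Set}$ is $\Sigma_f\Delta_g$. Linear bicomodules between discrete categories are exactly the left adjoints in $\mathbb C\mathbf{at}^\sharp$, with conjunctive right adjoints; $^{\dagger r}$ and $^{\dagger l}$ denote right and left adjoints. The dual $m^\vee:=[m,\bot]_{C\mathcal y,D\mathcal y}$, where $\bot=CD\mathcal y$ is the terminal span and $[-,-]$ the local internal hom, exchanges linear and conjunctive bicomodules: $(\sum_{a\in C}M_a\mathcal y)^\vee\cong\sum_{a\in C}\mathcal y^{M_a}$ and conversely; in prafunctor terms it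 sends $\Sigma_f\Delta_g$ to $\Pi_f\Delta_g$ and vice versa. *)

theory Defs
  imports "HOL-Library.FuncSet"
begin

text \<open>A (C y, D y)-bicomodule is a polynomial whose positions lie over elements of C (left coaction)
and whose directions are labelled by elements of D (right coaction).\<close>

record ('c,'d,'p,'e) bicomod =
  pos  :: "'p set"
  base :: "'p \<Rightarrow> 'c"
  dirs :: "'p \<Rightarrow> 'e set"
  lab  :: "'p \<Rightarrow> 'e \<Rightarrow> 'd"

definition is_bicomod :: "'c set \<Rightarrow> 'd set \<Rightarrow> ('c,'d,'p,'e) bicomod \<Rightarrow> bool" where
  "is_bicomod C D p \<longleftrightarrow>
     (\<forall>i\<in>pos p. base p i \<in> C \<and> (\<forall>e\<in>dirs p i. lab p i e \<in> D))"

type_synonym ('p1,'e1,'p2,'e2) bmap = "('p1 \<Rightarrow> 'p2) \<times> ('p1 \<Rightarrow> 'e2 \<Rightarrow> 'e1)"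

definition is_map :: "('c,'d,'p1,'e1) bicomod \<Rightarrow> ('c,'d,'p2,'e2) bicomod
    \<Rightarrow> ('p1,'e1,'p2,'e2) bmap \<Rightarrow> bool" where
  "is_map p q a \<longleftrightarrow>
     (\<forall>i\<in>pos p. fst a i \<in> pos q \<and> base q (fst a i) = base p i \<and>
        (\<forall>e\<in>dirs q (fst a i). snd a i e \<in> dirs p i \<and> lab p i (snd a i e) = lab q (fst a i) e))"

definition vcomp :: "('p2,'e2,'p3,'e3) bmap \<Rightarrow> ('p1,'e1,'p2,'e2) bmap \<Rightarrow> ('p1,'e1,'p3,'e3) bmap" where
  "vcomp b a = (fst b \<circ> fst a, \<lambda>i e. snd a i (snd b (fst a i) e))"

definition idmap :: "('p,'e,'p,'e) bmap" where
  "idmap = (\<lambda>i. i, \<lambda>i e. e)"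

definition eq2 :: "('c,'d,'p1,'e1) bicomod \<Rightarrow> ('c,'d,'p2,'e2) bicomod
    \<Rightarrow> ('p1,'e1,'p2,'e2) bmap \<Rightarrow> ('p1,'e1,'p2,'e2) bmap \<Rightarrow> bool" where
  "eq2 p q a b \<longleftrightarrow>
     (\<forall>i\<in>pos p. fst a i = fst b i \<and> (\<forall>e\<in>dirs q (fst a i). snd a i e = snd b i e))"

definition bicomod_iso :: "('c,'d,'p1,'e1) bicomod \<Rightarrow> ('c,'d,'p2,'e2) bicomod \<Rightarrow> bool" where
  "bicomod_iso p q \<longleftrightarrow> (\<exists>a b. is_map p q a \<and> is_map q p b \<and>
      eq2 p p (vcomp b a) idmap \<and> eq2 q q (vcomp a b) idmap)"

definition idb :: "'c set \<Rightarrow> ('c,'c,'c,unit) bicomod" where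
  "idb C = \<lparr>pos = C, base = (\<lambda>c. c), dirs = (\<lambda>_. {()}), lab = (\<lambda>c _. c)\<rparr>"

text \<open>Horizontal composition p \<triangleleft>_D q (equalizer of p \<triangleleft> q \<rightrightarrows> p \<triangleleft> D y \<triangleleft> q).\<close>
definition hcomp :: "('c,'d,'p,'e) bicomod \<Rightarrow> ('d,'x,'q,'f) bicomod
    \<Rightarrow> ('c,'x,'p \<times> ('e \<Rightarrow> 'q),'e \<times> 'f) bicomod" where
  "hcomp p q = \<lparr>pos = {(i,\<psi>). i \<in> pos p \<and>
                   \<psi> \<in> (\<Pi>\<^sub>E e\<in>dirs p i. {j\<in>pos q. base q j = lab p i e})},
                base = (\<lambda>(i,\<psi>). base p i),
                dirs = (\<lambda>(i,\<psi>). SIGMA e:dirs p i. dirs q (\<psi> e)),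
                lab = (\<lambda>(i,\<psi>) (e,e'). lab q (\<psi> e) e')\<rparr>"

definition whisk_r :: "('c,'d,'p2,'e2) bicomod \<Rightarrow> ('p1,'e1,'p2,'e2) bmap \<Rightarrow> ('d,'x,'q,'f) bicomod
    \<Rightarrow> ('p1 \<times> ('e1 \<Rightarrow> 'q), 'e1 \<times> 'f, 'p2 \<times> ('e2 \<Rightarrow> 'q), 'e2 \<times> 'f) bmap" where
  "whisk_r p' a q = (\<lambda>(i,\<psi>). (fst a i, restrict (\<lambda>e'. \<psi> (snd a i e')) (dirs p' (fst a i))),
                     \<lambda>(i,\<psi>) (e',e''). (snd a i e', e''))"

definition whisk_l :: "('c,'d,'p,'e) bicomod \<Rightarrow> ('q1,'f1,'q2,'f2) bmap
    \<Rightarrow> ('p \<times> ('e \<Rightarrow> 'q1), 'e \<times> 'f1, 'p \<times> ('e \<Rightarrow> 'q2), 'e \<times> 'f2) bmap" where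
  "whisk_l p b = (\<lambda>(i,\<psi>). (i, restrict (\<lambda>e. fst b (\<psi> e)) (dirs p i)),
                  \<lambda>(i,\<psi>) (e,e''). (e, snd b (\<psi> e) e''))"

definition lunit :: "('c \<times> (unit \<Rightarrow> 'p), unit \<times> 'e, 'p, 'e) bmap" where
  "lunit = (\<lambda>(c,\<psi>). \<psi> (), \<lambda>(c,\<psi>) e. ((), e))"

definition lunit_inv :: "('c,'d,'p,'e) bicomod \<Rightarrow> ('p, 'e, 'c \<times> (unit \<Rightarrow> 'p), unit \<times> 'e) bmap" where
  "lunit_inv p = (\<lambda>i. (base p i, restrict (\<lambda>u. i) {()}), \<lambda>i (u,e). e)"

definition runit :: "('p \<times> ('e \<Rightarrow> 'd), 'e \<times> unit, 'p, 'e) bmap" where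
  "runit = (\<lambda>(i,\<psi>). i, \<lambda>(i,\<psi>) e. (e, ()))"

definition runit_inv :: "('c,'d,'p,'e) bicomod \<Rightarrow> ('p, 'e, 'p \<times> ('e \<Rightarrow> 'd), 'e \<times> unit) bmap" where
  "runit_inv p = (\<lambda>i. (i, restrict (lab p i) (dirs p i)), \<lambda>i (e,u). e)"

definition assoc :: "('c,'d,'p,'e) bicomod \<Rightarrow> ('d,'x,'q,'f) bicomod \<Rightarrow>
   (('p \<times> ('e \<Rightarrow> 'q)) \<times> ('e \<times> 'f \<Rightarrow> 'r), ('e \<times> 'f) \<times> 'g,
    'p \<times> ('e \<Rightarrow> 'q \<times> ('f \<Rightarrow> 'r)), 'e \<times> ('f \<times> 'g)) bmap" where
  "assoc p q = (\<lambda>((i,\<psi>),\<chi>). (i, restrict (\<lambda>e. (\<psi> e, restrict (\<lambda>e'. \<chi> (e,e')) (dirs q (\<psi> e)))) (dirs p i)),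
                \<lambda>((i,\<psi>),\<chi>) (e,(e',e'')). ((e,e'),e''))"

definition assoc_inv :: "('c,'d,'p,'e) bicomod \<Rightarrow> ('d,'x,'q,'f) bicomod \<Rightarrow>
   ('p \<times> ('e \<Rightarrow> 'q \<times> ('f \<Rightarrow> 'r)), 'e \<times> ('f \<times> 'g),
    ('p \<times> ('e \<Rightarrow> 'q)) \<times> ('e \<times> 'f \<Rightarrow> 'r), ('e \<times> 'f) \<times> 'g) bmap" where
  "assoc_inv p q = (\<lambda>(i,\<omega>). ((i, restrict (\<lambda>e. fst (\<omega> e)) (dirs p i)),
                               restrict (\<lambda>(e,e'). snd (\<omega> e) e') (SIGMA e:dirs p i. dirs q (fst (\<omega> e)))),
                    \<lambda>(i,\<omega>) ((e,e'),e''). (e,(e',e'')))"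

definition is_adjunction ::
  "'c set \<Rightarrow> 'd set \<Rightarrow> ('c,'d,'l,'k) bicomod \<Rightarrow> ('d,'c,'r,'s) bicomod
   \<Rightarrow> ('d, unit, 'r \<times> ('s \<Rightarrow> 'l), 's \<times> 'k) bmap
   \<Rightarrow> ('l \<times> ('k \<Rightarrow> 'r), 'k \<times> 's, 'c, unit) bmap \<Rightarrow> bool" where
  "is_adjunction C D L R \<eta> \<epsilon> \<longleftrightarrow>
     is_bicomod C D L \<and> is_bicomod D C R \<and>
     is_map (idb D) (hcomp R L) \<eta> \<and> is_map (hcomp L R) (idb C) \<epsilon> \<and>
     eq2 L L (vcomp lunit (vcomp (whisk_r (idb C) \<epsilon> L) (vcomp (assoc_inv L R)
               (vcomp (whisk_l L \<eta>) (runit_inv L))))) idmap \<and>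
     eq2 R R (vcomp runit (vcomp (whisk_l R \<epsilon>) (vcomp (assoc R L)
               (vcomp (whisk_r (hcomp R L) \<eta> R) (lunit_inv R))))) idmap"

definition is_left_adjoint :: "'c set \<Rightarrow> 'd set \<Rightarrow> ('c,'d,'l,'k) bicomod \<Rightarrow> ('d,'c,'r,'s) bicomod \<Rightarrow> bool" where
  "is_left_adjoint C D L R \<longleftrightarrow> (\<exists>\<eta> \<epsilon>. is_adjunction C D L R \<eta> \<epsilon>)"

text \<open>Local internal hom [p,q] of (C y, D y)-bicomodules (w.r.t. the local Dirichlet-type product
whose directions are fibre products over D), written out explicitly:
 [p,q]_c = \<Pi>_{i \<in> p_c} \<Sigma>_{k \<in> q_c} {label-preserving \<sigma> : q[k] \<rightarrow> p[i]} with directions \<Sigma>_i q[k_i].\<close>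
definition ihom :: "'c set \<Rightarrow> ('c,'d,'p,'e) bicomod \<Rightarrow> ('c,'d,'q,'f) bicomod
    \<Rightarrow> ('c,'d,'c \<times> ('p \<Rightarrow> 'q \<times> ('f \<Rightarrow> 'e)), 'p \<times> 'f) bicomod" where
  "ihom C p q = \<lparr>pos = {(c,\<phi>). c \<in> C \<and>
        \<phi> \<in> (\<Pi>\<^sub>E i\<in>{i\<in>pos p. base p i = c}.
               {(k,\<sigma>). k \<in> pos q \<and> base q k = c \<and>
                  \<sigma> \<in> (\<Pi>\<^sub>E e'\<in>dirs q k. {e\<in>dirs p i. lab p i e = lab q k e'})})},
      base = fst,
      dirs = (\<lambda>(c,\<phi>). {(i,e'). i \<in> pos p \<and> base p i = c \<and> e' \<in> dirs q (fst (\<phi> i))}),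
      lab = (\<lambda>(c,\<phi>) (i,e'). lab q (fst (\<phi> i)) e')\<rparr>"

text \<open>Terminal span C \<leftarrow> C\<times>D \<rightarrow> D as linear bicomodule CD y.\<close>
definition bot :: "'c set \<Rightarrow> 'd set \<Rightarrow> ('c,'d,'c \<times> 'd,unit) bicomod" where
  "bot C D = \<lparr>pos = C \<times> D, base = fst, dirs = (\<lambda>_. {()}), lab = (\<lambda>x _. snd x)\<rparr>"

definition dual :: "'c set \<Rightarrow> 'd set \<Rightarrow> ('c,'d,'p,'e) bicomod
    \<Rightarrow> ('c,'d,'c \<times> ('p \<Rightarrow> ('c \<times> 'd) \<times> (unit \<Rightarrow> 'e)), 'p \<times> unit) bicomod" where
  "dual C D p = ihom C p (bot C D)"

text \<open>Span C \<leftarrow>f M \<rightarrow>g D as linear (C y, D y)-bicomodule M y.\<close>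
definition linb :: "'m set \<Rightarrow> ('m \<Rightarrow> 'c) \<Rightarrow> ('m \<Rightarrow> 'd) \<Rightarrow> ('c,'d,'m,unit) bicomod" where
  "linb M f g = \<lparr>pos = M, base = f, dirs = (\<lambda>_. {()}), lab = (\<lambda>m _. g m)\<rparr>"

end

theory Submission
  imports Defs
begin

definition R0 :: "'m set \<Rightarrow> ('m \<Rightarrow> 'c) \<Rightarrow> ('m \<Rightarrow> 'd) \<Rightarrow> 'd set \<Rightarrow> ('d,'c,'d,'m) bicomod" where
  "R0 M f g D = \<lparr>pos = D, base = (\<lambda>d. d), dirs = (\<lambda>d. {m\<in>M. g m = d}), lab = (\<lambda>d m. f m)\<rparr>"

definition eta0 :: "'m set \<Rightarrow> ('m \<Rightarrow> 'd) \<Rightarrow> ('d, unit, 'd \<times> ('m \<Rightarrow> 'm), 'm \<times> unit) bmap" where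
  "eta0 M g = (\<lambda>d. (d, restrict (\<lambda>m. m) {m\<in>M. g m = d}), \<lambda>d e. ())"

definition eps0 :: "('m \<Rightarrow> 'c) \<Rightarrow> ('m \<times> (unit \<Rightarrow> 'd), unit \<times> 'm, 'c, unit) bmap" where
  "eps0 f = (\<lambda>(m,\<chi>). f m, \<lambda>(m,\<chi>) u. ((), m))"

lemma part1:
  assumes "f \<in> M \<rightarrow> C" and "g \<in> M \<rightarrow> D"
  shows "is_adjunction C D (linb M f g) (R0 M f g D) (eta0 M g) (eps0 f)"
  using assms
  unfolding is_adjunction_def is_bicomod_def is_map_def eq2_def
  by (auto simp: R0_def eta0_def eps0_def linb_def hcomp_def idb_def vcomp_def idmap_def
     whisk_r_def whisk_l_def lunit_def lunit_inv_def runit_def runit_inv_def assoc_def assoc_inv_def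
     PiE_iff Pi_iff split: prod.splits)

definition kk :: "'m set \<Rightarrow> ('m \<Rightarrow> 'c) \<Rightarrow> ('m \<Rightarrow> 'd) \<Rightarrow> 'c \<Rightarrow> 'c \<times> ('m \<Rightarrow> ('c \<times> 'd) \<times> (unit \<Rightarrow> unit))" where
  "kk M f g c = (c, restrict (\<lambda>m. ((c, g m), restrict (\<lambda>_. ()) {()})) {m\<in>M. f m = c})"

lemma unit_fun: "(h :: unit \<Rightarrow> unit) = restrict (\<lambda>_. ()) {()}"
  by (auto simp: fun_eq_iff)

lemma dual_pos:
  assumes "g \<in> M \<rightarrow> D"
  shows "x \<in> pos (dual C D (linb M f g)) \<longleftrightarrow> fst x \<in> C \<and> x = kk M f g (fst x)"
proof
  assume x: "x \<in> pos (dual C D (linb M f g))"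
  obtain c \<phi> where xe: "x = (c, \<phi>)" by (cases x)
  have c: "c \<in> C" and ph: "\<phi> \<in> (\<Pi>\<^sub>E i\<in>{i\<in>M. f i = c}. {(k,\<sigma>). k \<in> C \<times> D \<and> fst k = c \<and>
                  \<sigma> \<in> (\<Pi>\<^sub>E e'\<in>{()}. {e\<in>{()}. g i = snd k})})"
    using x by (auto simp: xe dual_def ihom_def bot_def linb_def)
  have "\<phi> = snd (kk M f g c)"
  proof
    fix i show "\<phi> i = snd (kk M f g c) i"
    proof (cases "i \<in> M \<and> f i = c")
      case True
      then obtain k \<sigma> where "\<phi> i = (k, \<sigma>)" "k \<in> C \<times> D" "fst k = c" "\<sigma> \<in> (\<Pi>\<^sub>E e'\<in>{()}. {e\<in>{()}. g i = snd k})"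
        using ph by (cases "\<phi> i") (auto simp: PiE_iff)
      moreover then have "snd k = g i" by (auto simp: PiE_iff split: if_splits)
      ultimately show ?thesis using True by (cases k) (auto simp: kk_def unit_fun[of \<sigma>])
    next
      case False then show ?thesis using ph by (auto simp: kk_def PiE_iff extensional_def)
    qed
  qed
  then show "fst x \<in> C \<and> x = kk M f g (fst x)" using c by (simp add: xe kk_def)
next
  assume "fst x \<in> C \<and> x = kk M f g (fst x)"
  then show "x \<in> pos (dual C D (linb M f g))" using assms
    by (cases x) (auto simp: dual_def ihom_def bot_def linb_def kk_def PiE_iff Pi_iff)
qed

lemma dual_base: "base (dual C D (linb M f g)) x = fst x"
  by (simp add: dual_def ihom_def)
lemma dual_dirs: "dirs (dual C D (linb M f g)) (kk M f g c) = {(i,u). i \<in> M \<and> f i = c}"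
  by (auto simp: dual_def ihom_def bot_def linb_def kk_def)
lemma dual_lab: "i \<in> M \<Longrightarrow> f i = c \<Longrightarrow> lab (dual C D (linb M f g)) (kk M f g c) (i,u) = g i"
  by (auto simp: dual_def ihom_def bot_def linb_def kk_def)
lemma kk_fst[simp]: "fst (kk M f g c) = c" by (simp add: kk_def)

lemma linb_simps: "pos (linb M f g) = M" "base (linb M f g) = f" "dirs (linb M f g) i = {()}" "lab (linb M f g) i e = g i"
  by (simp_all add: linb_def)

definition eta1 :: "'m set \<Rightarrow> ('m \<Rightarrow> 'c) \<Rightarrow> ('m \<Rightarrow> 'd) \<Rightarrow> ('c, unit, ('c \<times> ('m \<Rightarrow> ('c \<times> 'd) \<times> (unit \<Rightarrow> unit))) \<times> ('m \<times> unit \<Rightarrow> 'm), ('m \<times> unit) \<times> unit) bmap" where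
  "eta1 M f g = (\<lambda>c. (kk M f g c, restrict (\<lambda>(m,u). m) {(i,u). i \<in> M \<and> f i = c}), \<lambda>c e. ())"

definition eps1 :: "('m \<Rightarrow> 'd) \<Rightarrow> ('m \<times> (unit \<Rightarrow> 'x), unit \<times> ('m \<times> unit), 'd, unit) bmap" where
  "eps1 g = (\<lambda>(m,\<chi>). g m, \<lambda>(m,\<chi>) u. ((), (m,())))"

lemma part3:
  assumes "f \<in> M \<rightarrow> C" and "g \<in> M \<rightarrow> D"
  shows "is_adjunction D C (linb M g f) (dual C D (linb M f g)) (eta1 M f g) (eps1 g)"
  using assms
  unfolding is_adjunction_def is_bicomod_def is_map_def eq2_def
  by (auto simp: dual_pos[OF assms(2)] dual_base dual_dirs dual_lab eta1_def eps1_def linb_simps hcomp_def idb_def vcomp_def idmap_def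
     whisk_r_def whisk_l_def lunit_def lunit_inv_def runit_def runit_inv_def assoc_def assoc_inv_def
     PiE_iff Pi_iff split: prod.splits)

lemma unit_fun2: "(h :: unit \<Rightarrow> 'a) = restrict (\<lambda>_. h ()) {()}"
  by (auto simp: fun_eq_iff)

lemma part2:
  fixes R :: "('d,'c,'r,'s) bicomod" and M :: "'m set" and f :: "'m \<Rightarrow> 'c" and g :: "'m \<Rightarrow> 'd"
  assumes fC: "f \<in> M \<rightarrow> C" and gD: "g \<in> M \<rightarrow> D"
    and adj: "is_adjunction C D (linb M f g) R \<eta> \<epsilon>"
  shows "bicomod_iso (linb M g f) (dual D C R)"
proof -
  define rd where "rd d = fst (fst \<eta> d)" for d
  define ps where "ps d = snd (fst \<eta> d)" for d
  define sg where "sg m r = snd (snd \<epsilon> (m, restrict (\<lambda>_. r) {()}) ())" for m r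
  have bic: "base R r \<in> D" "\<And>s. s \<in> dirs R r \<Longrightarrow> lab R r s \<in> C" if "r \<in> pos R" for r
    using adj that by (auto simp: is_adjunction_def is_bicomod_def)
  have etam: "is_map (idb D) (hcomp R (linb M f g)) \<eta>"
    using adj by (simp add: is_adjunction_def)
  have epsm: "is_map (hcomp (linb M f g) R) (idb C) \<epsilon>"
    using adj by (simp add: is_adjunction_def)
  have rd: "rd d \<in> pos R" "base R (rd d) = d" if "d \<in> D" for d
    using etam that by (auto simp: is_map_def idb_def hcomp_def rd_def split_beta)
  have ps: "ps d s \<in> M" "f (ps d s) = lab R (rd d) s" "g (ps d s) = d" if "d \<in> D" "s \<in> dirs R (rd d)" for d s
  proof -
    have "fst \<eta> d \<in> pos (hcomp R (linb M f g))" using etam that by (auto simp: is_map_def idb_def)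
    then show "ps d s \<in> M" "f (ps d s) = lab R (rd d) s"
      using that by (auto simp: hcomp_def linb_simps rd_def ps_def PiE_iff split_beta)
    have "(s,()) \<in> dirs (hcomp R (linb M f g)) (fst \<eta> d)"
      using that by (auto simp: hcomp_def linb_simps rd_def ps_def split_beta)
    then show "g (ps d s) = d"
      using etam that by (auto simp: is_map_def idb_def hcomp_def linb_simps rd_def ps_def split_beta)
  qed
  have sg: "sg m r \<in> dirs R r" "lab R r (sg m r) = f m" if "m \<in> M" "r \<in> pos R" "base R r = g m" for m r
  proof -
    let ?i = "(m, restrict (\<lambda>_. r) {()})"
    have i: "?i \<in> pos (hcomp (linb M f g) R)" using that by (auto simp: hcomp_def linb_simps)
    then have fe: "fst \<epsilon> ?i = f m" using epsm by (auto simp: is_map_def idb_def hcomp_def linb_simps)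
    have "snd \<epsilon> ?i () \<in> dirs (hcomp (linb M f g) R) ?i"
         "lab (hcomp (linb M f g) R) ?i (snd \<epsilon> ?i ()) = lab (idb C) (fst \<epsilon> ?i) ()"
      using epsm i by (auto simp: is_map_def idb_def)
    then show "sg m r \<in> dirs R r" "lab R r (sg m r) = f m"
      using fe by (auto simp: hcomp_def linb_simps sg_def idb_def split_beta)
  qed
  have T1: "ps (g m) (sg m (rd (g m))) = m" if m: "m \<in> M" for m
  proof -
    have "eq2 (linb M f g) (linb M f g) (vcomp lunit (vcomp (whisk_r (idb C) \<epsilon> (linb M f g)) (vcomp (assoc_inv (linb M f g) R)
               (vcomp (whisk_l (linb M f g) \<eta>) (runit_inv (linb M f g)))))) idmap"
      using adj by (simp add: is_adjunction_def)
    then have "fst (vcomp lunit (vcomp (whisk_r (idb C) \<epsilon> (linb M f g)) (vcomp (assoc_inv (linb M f g) R)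
               (vcomp (whisk_l (linb M f g) \<eta>) (runit_inv (linb M f g)))))) m = m"
      using m by (simp add: eq2_def linb_simps idmap_def)
    moreover have "sg m (rd (g m)) \<in> dirs R (rd (g m))" using sg[of m "rd (g m)"] rd[of "g m"] m gD by auto
    ultimately show ?thesis
      by (simp add: vcomp_def lunit_def whisk_r_def assoc_inv_def whisk_l_def runit_inv_def linb_simps idb_def
          split_beta sg_def rd_def ps_def mem_Times_iff)
  qed
  have T2: "rd (base R r) = r" "\<And>s. s \<in> dirs R r \<Longrightarrow> sg (ps (base R r) s) r = s" if r: "r \<in> pos R" for r
  proof -
    have "eq2 R R (vcomp runit (vcomp (whisk_l R \<epsilon>) (vcomp (assoc R (linb M f g))
               (vcomp (whisk_r (hcomp R (linb M f g)) \<eta> R) (lunit_inv R))))) idmap"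
      using adj by (simp add: is_adjunction_def)
    then have 1: "fst (vcomp runit (vcomp (whisk_l R \<epsilon>) (vcomp (assoc R (linb M f g))
               (vcomp (whisk_r (hcomp R (linb M f g)) \<eta> R) (lunit_inv R))))) r = r"
      and 2: "\<And>s. s \<in> dirs R r \<Longrightarrow> snd (vcomp runit (vcomp (whisk_l R \<epsilon>) (vcomp (assoc R (linb M f g))
               (vcomp (whisk_r (hcomp R (linb M f g)) \<eta> R) (lunit_inv R))))) r s = s"
      using r by (simp_all add: eq2_def idmap_def)
    from 1 show A: "rd (base R r) = r"
      by (simp add: vcomp_def runit_def whisk_r_def assoc_def whisk_l_def lunit_inv_def linb_simps hcomp_def split_beta rd_def)
    fix s assume s: "s \<in> dirs R r"
    from 2[OF s] A s show "sg (ps (base R r) s) r = s"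
      by (simp add: vcomp_def runit_def whisk_r_def assoc_def whisk_l_def lunit_inv_def linb_simps hcomp_def split_beta rd_def ps_def sg_def)
  qed
  define a where "a = ((\<lambda>m. (g m, restrict (\<lambda>i. ((g m, f m), restrict (\<lambda>_. sg m i) {()})) {i\<in>pos R. base R i = g m})),
                        (\<lambda>(m::'m) (e::'r \<times> unit). ()))"
  define b where "b = ((\<lambda>(d,\<phi>::'r \<Rightarrow> ('d \<times> 'c) \<times> (unit \<Rightarrow> 's)). ps d (snd (\<phi> (rd d)) ())), (\<lambda>(d,\<phi>::'r \<Rightarrow> ('d \<times> 'c) \<times> (unit \<Rightarrow> 's)) (u::unit). (rd d, ())))"
  have uniq: "i = rd d" if "i \<in> pos R" "base R i = d" for i d using T2(1)[OF that(1)] that(2) by simp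
  have posK: "x \<in> pos (dual D C R) \<longleftrightarrow> fst x \<in> D \<and> snd x \<in> (\<Pi>\<^sub>E i\<in>{i\<in>pos R. base R i = fst x}.
               {(k,\<sigma>). k \<in> D \<times> C \<and> fst k = fst x \<and> \<sigma> \<in> (\<Pi>\<^sub>E e'\<in>{()}. {e\<in>dirs R i. lab R i e = snd k})})" for x
    by (cases x) (simp add: dual_def ihom_def bot_def)
  have dirsK: "dirs (dual D C R) x = {(i,e'). i \<in> pos R \<and> base R i = fst x \<and> e' = ()}" for x
    by (cases x) (auto simp: dual_def ihom_def bot_def)
  have labK: "lab (dual D C R) x y = snd (fst (snd x (fst y)))" for x y
    by (cases x; cases y) (simp add: dual_def ihom_def bot_def)
  have baseK: "base (dual D C R) x = fst x" for x by (simp add: dual_def ihom_def)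
  have comp: "fst k = d \<and> \<sigma> () \<in> dirs R (rd d) \<and> lab R (rd d) (\<sigma> ()) = snd k"
    if x: "(d,\<phi>) \<in> pos (dual D C R)" and ph: "\<phi> (rd d) = (k,\<sigma>)" for d \<phi> k \<sigma>
  proof -
    have d: "d \<in> D" using x by (simp add: posK)
    have "\<phi> \<in> (\<Pi>\<^sub>E i\<in>{i\<in>pos R. base R i = d}.
               {(k,\<sigma>). k \<in> D \<times> C \<and> fst k = d \<and> \<sigma> \<in> (\<Pi>\<^sub>E e'\<in>{()}. {e\<in>dirs R i. lab R i e = snd k})})"
      using x by (simp add: posK)
    then have "\<phi> (rd d) \<in> {(k,\<sigma>). k \<in> D \<times> C \<and> fst k = d \<and> \<sigma> \<in> (\<Pi>\<^sub>E e'\<in>{()}. {e\<in>dirs R (rd d). lab R (rd d) e = snd k})}"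
      by (rule PiE_mem) (use rd[OF d] in auto)
    then show ?thesis using ph by (auto simp: PiE_iff)
  qed
  have ma: "is_map (linb M g f) (dual D C R) a"
    unfolding is_map_def
  proof (intro ballI conjI)
    fix m assume m: "m \<in> pos (linb M g f)"
    then have m: "m \<in> M" by (simp add: linb_simps)
    have gm: "g m \<in> D" using m gD by auto
    show "fst a m \<in> pos (dual D C R)"
      unfolding posK a_def using m gm sg[OF m] uniq fC by (auto simp: PiE_iff)
    show "base (dual D C R) (fst a m) = base (linb M g f) m" by (simp add: baseK a_def linb_simps)
    fix e assume e: "e \<in> dirs (dual D C R) (fst a m)"
    show "snd a m e \<in> dirs (linb M g f) m" by (simp add: a_def linb_simps)
    show "lab (linb M g f) m (snd a m e) = lab (dual D C R) (fst a m) e"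
      using e by (auto simp add: a_def linb_simps labK dirsK)
  qed
  have mb: "is_map (dual D C R) (linb M g f) b"
    unfolding is_map_def
  proof (intro ballI conjI)
    fix x assume x: "x \<in> pos (dual D C R)"
    obtain d \<phi> where xe: "x = (d,\<phi>)" by (cases x)
    have d: "d \<in> D" using x by (simp add: posK xe)
    obtain k \<sigma> where ph: "\<phi> (rd d) = (k,\<sigma>)" by (cases "\<phi> (rd d)")
    have kk: "fst k = d" "\<sigma> () \<in> dirs R (rd d)" "lab R (rd d) (\<sigma> ()) = snd k"
      using comp[of d \<phi> k \<sigma>] x ph by (auto simp: xe)
    show "fst b x \<in> pos (linb M g f)" using ps[OF d kk(2)] by (simp add: b_def xe ph linb_simps)
    show "base (linb M g f) (fst b x) = base (dual D C R) x"
      using ps[OF d kk(2)] by (simp add: b_def xe ph linb_simps baseK)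
    fix e assume "e \<in> dirs (linb M g f) (fst b x)"
    show "snd b x e \<in> dirs (dual D C R) x" using rd[OF d] by (simp add: b_def xe dirsK)
    show "lab (dual D C R) x (snd b x e) = lab (linb M g f) (fst b x) e"
      using ps[OF d kk(2)] kk by (simp add: b_def xe ph linb_simps labK)
  qed
  have e1: "eq2 (linb M g f) (linb M g f) (vcomp b a) idmap"
    unfolding eq2_def
  proof (intro ballI conjI)
    fix m assume m: "m \<in> pos (linb M g f)"
    then have m: "m \<in> M" by (simp add: linb_simps)
    have gm: "g m \<in> D" using m gD by auto
    show "fst (vcomp b a) m = fst idmap m"
      using T1[OF m] rd[OF gm] by (simp add: vcomp_def a_def b_def idmap_def)
    fix e show "snd (vcomp b a) m e = snd idmap m e" by (simp add: vcomp_def a_def idmap_def)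
  qed
  have e2: "eq2 (dual D C R) (dual D C R) (vcomp a b) idmap"
    unfolding eq2_def
  proof (intro ballI conjI)
    fix x assume x: "x \<in> pos (dual D C R)"
    obtain d \<phi> where xe: "x = (d,\<phi>)" by (cases x)
    have d: "d \<in> D" using x by (simp add: posK xe)
    obtain k \<sigma> where ph: "\<phi> (rd d) = (k,\<sigma>)" by (cases "\<phi> (rd d)")
    have kk: "fst k = d" "\<sigma> () \<in> dirs R (rd d)" "lab R (rd d) (\<sigma> ()) = snd k"
      using comp[of d \<phi> k \<sigma>] x ph by (auto simp: xe)
    have phE: "\<phi> \<in> extensional {i\<in>pos R. base R i = d}" using x by (simp add: posK xe PiE_iff)
    define m where "m = ps d (\<sigma> ())"
    have gm: "g m = d" and fm: "f m = snd k" using ps[OF d kk(2)] kk by (auto simp: m_def)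
    have sgm: "sg m (rd d) = \<sigma> ()" using T2(2)[OF rd(1)[OF d]] kk(2) rd(2)[OF d] by (simp add: m_def)
    have fb: "fst b x = m" by (simp add: b_def xe ph m_def)
    have "fst a m = x"
    proof -
      have "restrict (\<lambda>i. ((g m, f m), restrict (\<lambda>_. sg m i) {()})) {i\<in>pos R. base R i = g m} = \<phi>"
      proof
        fix i show "restrict (\<lambda>i. ((g m, f m), restrict (\<lambda>_. sg m i) {()})) {i\<in>pos R. base R i = g m} i = \<phi> i"
        proof (cases "i \<in> pos R \<and> base R i = d")
          case True
          then have "i = rd d" using uniq by blast
          then show ?thesis using True gm fm sgm kk(1) ph unit_fun2[of \<sigma>] by (cases k) simp
        next
          case False then show ?thesis using phE gm by (auto simp: extensional_def)
        qed
      qed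
      then show ?thesis by (simp add: a_def xe gm)
    qed
    then show "fst (vcomp a b) x = fst idmap x" by (simp add: vcomp_def fb idmap_def)
    fix e assume e: "e \<in> dirs (dual D C R) (fst (vcomp a b) x)"
    then have "e \<in> dirs (dual D C R) x" using \<open>fst a m = x\<close> by (simp add: vcomp_def fb)
    then obtain i where "e = (i,())" "i \<in> pos R" "base R i = d" by (auto simp: dirsK xe)
    then show "snd (vcomp a b) x e = snd idmap x e"
      using uniq by (auto simp: vcomp_def a_def b_def xe idmap_def)
  qed
  show ?thesis unfolding bicomod_iso_def using ma mb e1 e2 by blast
qed
lemma pair_unit: "(fst p, ()) = (p :: 'a \<times> unit)" by (cases p) simp

lemma part4:
  fixes L :: "('d,'c,'l,'k) bicomod" and M :: "'m set" and f :: "'m \<Rightarrow> 'c" and g :: "'m \<Rightarrow> 'd"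
  assumes fC: "f \<in> M \<rightarrow> C" and gD: "g \<in> M \<rightarrow> D"
    and adj: "is_adjunction D C L (dual C D (linb M f g)) \<eta> \<epsilon>"
  shows "bicomod_iso (linb M g f) L"
proof -
  let ?K = "dual C D (linb M f g)"
  have bic: "base L l \<in> D" "\<And>e. e \<in> dirs L l \<Longrightarrow> lab L l e \<in> C" if "l \<in> pos L" for l
    using adj that by (auto simp: is_adjunction_def is_bicomod_def)
  have etam: "is_map (idb C) (hcomp ?K L) \<eta>"
    using adj by (simp add: is_adjunction_def)
  have epsm: "is_map (hcomp L ?K) (idb D) \<epsilon>"
    using adj by (simp add: is_adjunction_def)
  note posK = dual_pos[OF gD]
  have kkK: "kk M f g c \<in> pos ?K" if "c \<in> C" for c using posK[of "kk M f g c"] that by simp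
  have eta1: "fst (fst \<eta> c) = kk M f g c" if c: "c \<in> C" for c
  proof -
    have "fst \<eta> c \<in> pos (hcomp ?K L)" "base (hcomp ?K L) (fst \<eta> c) = c"
      using etam c by (auto simp: is_map_def idb_def)
    then have "fst (fst \<eta> c) \<in> pos ?K" "fst (fst (fst \<eta> c)) = c"
      by (auto simp: hcomp_def split_beta dual_base)
    then show ?thesis using posK by metis
  qed
  define \<psi>c where "\<psi>c c = snd (fst \<eta> c)" for c
  have eta2: "\<psi>c c (m,()) \<in> pos L \<and> base L (\<psi>c c (m,())) = g m" if "c \<in> C" "m \<in> M" "f m = c" for c m
  proof -
    have "fst \<eta> c \<in> pos (hcomp ?K L)" using etam that by (auto simp: is_map_def idb_def)
    then have "\<psi>c c \<in> (\<Pi>\<^sub>E s\<in>dirs ?K (kk M f g c). {j\<in>pos L. base L j = lab ?K (kk M f g c) s})"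
      using eta1[OF that(1)] by (auto simp: hcomp_def split_beta \<psi>c_def)
    then have "\<psi>c c (m,()) \<in> {j\<in>pos L. base L j = lab ?K (kk M f g c) (m,())}"
      by (rule PiE_mem) (use that in \<open>simp add: dual_dirs\<close>)
    then show ?thesis using that by (simp add: dual_lab)
  qed
  have eta3: "lab L (\<psi>c c (m,())) e = c" if "c \<in> C" "m \<in> M" "f m = c" "e \<in> dirs L (\<psi>c c (m,()))" for c m e
  proof -
    have "((m,()),e) \<in> dirs (hcomp ?K L) (fst \<eta> c)"
      using that eta1[OF that(1)] by (auto simp: hcomp_def split_beta \<psi>c_def dual_dirs)
    then have "lab (idb C) c () = lab (hcomp ?K L) (fst \<eta> c) ((m,()),e)"
      using etam that(1) unfolding is_map_def by (simp add: idb_def)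
    then show ?thesis by (simp add: idb_def hcomp_def split_beta \<psi>c_def)
  qed
  define \<chi>l where "\<chi>l l = restrict (\<lambda>i. fst (fst \<eta> (lab L l i))) (dirs L l)" for l
  define E where "E l = snd \<epsilon> (l, \<chi>l l) ()" for l
  have eps: "E l \<in> (SIGMA e:dirs L l. dirs ?K (kk M f g (lab L l e))) \<and> fst (E l) \<in> dirs L l \<and>
      fst (snd (E l)) \<in> M \<and> f (fst (snd (E l))) = lab L l (fst (E l)) \<and> g (fst (snd (E l))) = base L l \<and>
      snd (snd (E l)) = ()" if l: "l \<in> pos L" for l
  proof -
    have i: "(l, \<chi>l l) \<in> pos (hcomp L ?K)"
      using l bic(2)[OF l] eta1 kkK by (auto simp: hcomp_def \<chi>l_def dual_base)
    then have fe: "fst \<epsilon> (l, \<chi>l l) = base L l" using epsm by (auto simp: is_map_def idb_def hcomp_def)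
    have "E l \<in> dirs (hcomp L ?K) (l, \<chi>l l)"
         "lab (hcomp L ?K) (l, \<chi>l l) (E l) = lab (idb D) (fst \<epsilon> (l, \<chi>l l)) ()"
      using epsm i by (auto simp: is_map_def idb_def E_def)
    then show ?thesis using fe bic(2)[OF l] eta1
      by (auto simp: hcomp_def idb_def \<chi>l_def dual_dirs dual_lab split_beta)
  qed
  have T1: "\<psi>c (lab L l (fst (E l))) (fst (snd (E l)), ()) = l" "\<And>e. e \<in> dirs L l \<Longrightarrow> fst (E l) = e"
    if l: "l \<in> pos L" for l
  proof -
    have "eq2 L L (vcomp lunit (vcomp (whisk_r (idb D) \<epsilon> L) (vcomp (assoc_inv L ?K)
               (vcomp (whisk_l L \<eta>) (runit_inv L))))) idmap"
      using adj by (simp add: is_adjunction_def)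
    then have 1: "fst (vcomp lunit (vcomp (whisk_r (idb D) \<epsilon> L) (vcomp (assoc_inv L ?K)
               (vcomp (whisk_l L \<eta>) (runit_inv L))))) l = l"
     and 2: "\<And>e. e \<in> dirs L l \<Longrightarrow> snd (vcomp lunit (vcomp (whisk_r (idb D) \<epsilon> L) (vcomp (assoc_inv L ?K)
               (vcomp (whisk_l L \<eta>) (runit_inv L))))) l e = e"
      using l by (simp_all add: eq2_def idmap_def idb_def vcomp_def lunit_def)
    have ee: "E l \<in> (SIGMA e:dirs L l. dirs ?K (fst (if e \<in> dirs L l then fst \<eta> (lab L l e) else undefined)))"
      using eps[OF l] bic(2)[OF l] eta1 by (auto simp: mem_Times_iff)
    from 1 ee eps[OF l] show "\<psi>c (lab L l (fst (E l))) (fst (snd (E l)), ()) = l"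
      by (simp add: vcomp_def lunit_def whisk_r_def assoc_inv_def whisk_l_def runit_inv_def idb_def split_beta
          \<psi>c_def E_def \<chi>l_def pair_unit cong: restrict_cong)
    fix e assume e: "e \<in> dirs L l"
    from 2[OF e] show "fst (E l) = e"
      by (simp add: vcomp_def lunit_def whisk_r_def assoc_inv_def whisk_l_def runit_inv_def idb_def split_beta
          E_def \<chi>l_def cong: restrict_cong)
  qed
  have T2: "fst (snd (E (\<psi>c c (m,())))) = m" if c: "c \<in> C" and m: "m \<in> M" "f m = c" for c m
  proof -
    have s: "(m,()) \<in> dirs ?K (kk M f g c)" using m by (simp add: dual_dirs)
    have kkK: "kk M f g c \<in> pos ?K" using kkK[OF c] .
    have "eq2 ?K ?K (vcomp runit (vcomp (whisk_l ?K \<epsilon>) (vcomp (assoc ?K L)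
               (vcomp (whisk_r (hcomp ?K L) \<eta> ?K) (lunit_inv ?K))))) idmap"
      using adj by (simp add: is_adjunction_def)
    then have 2: "snd (vcomp runit (vcomp (whisk_l ?K \<epsilon>) (vcomp (assoc ?K L)
               (vcomp (whisk_r (hcomp ?K L) \<eta> ?K) (lunit_inv ?K))))) (kk M f g c) (m,()) = (m,())"
      using kkK s by (auto simp: eq2_def idmap_def vcomp_def runit_def whisk_l_def assoc_def whisk_r_def lunit_inv_def
         dual_base split_beta)
    have chi: "(\<lambda>i\<in>dirs L (\<psi>c c (m,())). if ((m,()), i) \<in> dirs (hcomp ?K L) (fst \<eta> c) then kk M f g c else undefined)
       = \<chi>l (\<psi>c c (m,()))"
      unfolding \<chi>l_def
    proof (rule restrict_ext)
      fix i assume i: "i \<in> dirs L (\<psi>c c (m,()))"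
      then have "((m,()), i) \<in> dirs (hcomp ?K L) (fst \<eta> c)"
        using eta1[OF c] m by (auto simp: hcomp_def split_beta \<psi>c_def dual_dirs)
      then show "(if ((m,()), i) \<in> dirs (hcomp ?K L) (fst \<eta> c) then kk M f g c else undefined) = fst (fst \<eta> (lab L (\<psi>c c (m,())) i))"
        using eta3[OF c m i] eta1[OF c] by simp
    qed
    from 2 s eta1[OF c] chi show ?thesis
      by (simp add: vcomp_def runit_def whisk_r_def assoc_def whisk_l_def lunit_inv_def dual_base split_beta
          E_def \<psi>c_def)
  qed
  define a where "a = ((\<lambda>m. \<psi>c (f m) (m,())), (\<lambda>(m::'m) (e::'k). ()))"
  define b where "b = ((\<lambda>l. fst (snd (E l))), (\<lambda>(l::'l) (u::unit). fst (E l)))"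
  have ma: "is_map (linb M g f) L a"
    unfolding is_map_def
  proof (intro ballI conjI)
    fix m assume m: "m \<in> pos (linb M g f)"
    then have m: "m \<in> M" by (simp add: linb_simps)
    have fm: "f m \<in> C" using m fC by auto
    show "fst a m \<in> pos L" "base L (fst a m) = base (linb M g f) m"
      using eta2[OF fm m refl] by (simp_all add: a_def linb_simps)
    fix e assume e: "e \<in> dirs L (fst a m)"
    show "snd a m e \<in> dirs (linb M g f) m" by (simp add: a_def linb_simps)
    show "lab (linb M g f) m (snd a m e) = lab L (fst a m) e"
      using eta3[OF fm m refl] e by (simp add: a_def linb_simps)
  qed
  have mb: "is_map L (linb M g f) b"
    unfolding is_map_def
    using eps by (simp add: b_def linb_simps)
  have e1: "eq2 (linb M g f) (linb M g f) (vcomp b a) idmap"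
    unfolding eq2_def
  proof (intro ballI conjI)
    fix m assume m: "m \<in> pos (linb M g f)"
    then have m: "m \<in> M" by (simp add: linb_simps)
    have fm: "f m \<in> C" using m fC by auto
    show "fst (vcomp b a) m = fst idmap m"
      using T2[OF fm m refl] by (simp add: vcomp_def a_def b_def idmap_def)
    fix e show "snd (vcomp b a) m e = snd idmap m e" by (simp add: vcomp_def a_def idmap_def)
  qed
  have e2: "eq2 L L (vcomp a b) idmap"
    unfolding eq2_def
  proof (intro ballI conjI)
    fix l assume l: "l \<in> pos L"
    show "fst (vcomp a b) l = fst idmap l"
      using T1(1)[OF l] eps[OF l] by (simp add: vcomp_def a_def b_def idmap_def)
    fix e assume "e \<in> dirs L (fst (vcomp a b) l)"
    then have "e \<in> dirs L l" using T1(1)[OF l] eps[OF l] by (simp add: vcomp_def a_def b_def)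
    then show "snd (vcomp a b) l e = snd idmap l e"
      using T1(2)[OF l] by (simp add: vcomp_def a_def b_def idmap_def)
  qed
  show ?thesis unfolding bicomod_iso_def using ma mb e1 e2 by blast
qed
theorem corollary2p53:
  fixes C :: "'c set" and D :: "'d set" and M :: "'m set"
    and f :: "'m \<Rightarrow> 'c" and g :: "'m \<Rightarrow> 'd"
  assumes "f \<in> M \<rightarrow> C" and "g \<in> M \<rightarrow> D"
  shows "(\<exists>R :: ('d,'c,'d,'m) bicomod. is_left_adjoint C D (linb M f g) R)
    \<and> (\<forall>R :: ('d,'c,'r,'s) bicomod. is_left_adjoint C D (linb M f g) R
          \<longrightarrow> bicomod_iso (linb M g f) (dual D C R))
    \<and> (\<exists>L :: ('d,'c,'m,unit) bicomod. is_left_adjoint D C L (dual C D (linb M f g)))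
    \<and> (\<forall>L :: ('d,'c,'l,'k) bicomod. is_left_adjoint D C L (dual C D (linb M f g))
          \<longrightarrow> bicomod_iso (linb M g f) L)"
  using part1[OF assms] part2[OF assms] part3[OF assms] part4[OF assms]
  unfolding is_left_adjoint_def by blast

end
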